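(* For every constant $C$ with $0<C<1/\log 4$ there exists a constant $E>0$ depending on $C$ such that, for all sufficiently large positive integers $N$ and all $x\in\left[N,\exp\!\left(C(\log N)^2\right)\right]$, \[ |\varrho_N(x)|\le\exp\!\left(-\frac{\pi^2}{400^2}\exp\!\left(E\sqrt{\log x}\right)\right). \]
   Context: For a positive integer $N$ and real $x$, $\varrho_N(x):=\prod_{n=1}^N\cos(\pi x/n)$. *)

theory Defs
  imports "HOL-Analysis.Analysis"
begin

definition rho :: "nat \<Rightarrow> real \<Rightarrow> real" where
  "rho N x = (\<Prod>n=1..N. cos (pi * x / real n))"

end

theory Submission
  imports Defs "HOL-Real_Asymp.Real_Asymp"
begin

fun Dif :: "nat \<Rightarrow> (nat \<Rightarrow> real) \<Rightarrow> nat \<Rightarrow> real" where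
  "Dif 0 f n = f n"
| "Dif (Suc k) f n = Dif k f n - Dif k f (Suc n)"

fun Pk :: "nat \<Rightarrow> real \<Rightarrow> real" where
  "Pk 0 t = t"
| "Pk (Suc k) t = Pk k t * (t + real k + 1)"

lemma Dif_int: "Dif k (\<lambda>m. of_int (a m)) n \<in> \<int>"
  by (induction k arbitrary: n) auto

lemma Dif_diff: "Dif k (\<lambda>m. f m - g m) n = Dif k f n - Dif k g n"
  by (induction k arbitrary: n) auto

lemma Dif_small: "(\<forall>i\<le>k. \<bar>h (n+i)\<bar> < e) \<Longrightarrow> \<bar>Dif k h n\<bar> < 2^k * e"
proof (induction k arbitrary: n)
  case 0
  then show ?case by auto
next
  case (Suc k)
  have a: "\<bar>Dif k h n\<bar> < 2^k * e" using Suc.prems by (intro Suc.IH) auto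
  have b: "\<bar>Dif k h (Suc n)\<bar> < 2^k * e" using Suc.prems by (intro Suc.IH) auto
  show ?case using a b by auto
qed

lemma Pk_pos: "t > 0 \<Longrightarrow> Pk k t > 0"
  by (induction k) auto

lemma Pk_shift: "t * Pk k (t+1) = (t + real k + 1) * Pk k t"
proof (induction k)
  case 0 then show ?case by (simp add: algebra_simps)
next
  case (Suc k)
  have "t * Pk (Suc k) (t+1) = (t * Pk k (t+1)) * (t + 1 + real k + 1)" by (simp add: algebra_simps)
  also have "\<dots> = ((t + real k + 1) * Pk k t) * (t + 1 + real k + 1)" using Suc.IH by simp
  also have "\<dots> = (t + real (Suc k) + 1) * Pk (Suc k) t" by (simp add: algebra_simps)
  finally show ?case .
qed

lemma frac_aux: "(P::real) > 0 \<Longrightarrow> d > 0 \<Longrightarrow> a / P - a * n / (d * P) = a * (d - n) / (d * P)"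
  by (simp add: field_simps)

lemma Dif_recip:
  assumes "n \<ge> 1"
  shows "Dif k (\<lambda>m. x / real m) n = fact k * x / Pk k (real n)"
  using assms
proof (induction k arbitrary: n)
  case 0
  then show ?case by auto
next
  case (Suc k)
  have p1: "Pk k (real n) > 0" using Suc.prems by (intro Pk_pos) auto
  have p2: "Pk k (real n + 1) > 0" using Suc.prems by (intro Pk_pos) auto
  have sh: "real n * Pk k (real n + 1) = (real n + real k + 1) * Pk k (real n)"
    by (rule Pk_shift)
  have "Dif (Suc k) (\<lambda>m. x / real m) n = fact k * x / Pk k (real n) - fact k * x / Pk k (real n + 1)"
    using Suc by (simp add: add.commute)
  also have "fact k * x / Pk k (real n + 1) = fact k * x * real n / ((real n + real k + 1) * Pk k (real n))"
  proof -
    have "Pk k (real n + 1) = (real n + real k + 1) * Pk k (real n) / real n"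
      using sh Suc.prems by (simp add: field_simps)
    then show ?thesis using Suc.prems by simp
  qed
  also have "fact k * x / Pk k (real n) - fact k * x * real n / ((real n + real k + 1) * Pk k (real n))
      = fact (Suc k) * x / Pk (Suc k) (real n)"
  proof -
    have d: "real n + real k + 1 > 0" by simp
    have "fact k * x / Pk k (real n) - fact k * x * real n / ((real n + real k + 1) * Pk k (real n))
       = fact k * x * ((real n + real k + 1) - real n) / ((real n + real k + 1) * Pk k (real n))"
      by (rule frac_aux[OF p1 d])
    also have "\<dots> = fact (Suc k) * x / Pk (Suc k) (real n)"
      by (simp add: algebra_simps)
    finally show ?thesis .
  qed
  finally show ?case .
qed

lemma Pk_nonneg: "t \<ge> 0 \<Longrightarrow> Pk k t \<ge> 0"
  by (induction k) auto

lemma Pk_lower: "t \<ge> 0 \<Longrightarrow> t ^ (Suc k) \<le> Pk k t"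
proof (induction k)
  case 0 then show ?case by auto
next
  case (Suc k)
  have "t ^ Suc (Suc k) = t^(Suc k) * t" by simp
  also have "\<dots> \<le> Pk k t * (t + real k + 1)"
    using Suc Pk_nonneg[of t k] by (intro mult_mono) auto
  finally show ?case by simp
qed

lemma Pk_upper: "t \<ge> 0 \<Longrightarrow> Pk k t \<le> (t + real k) ^ (Suc k)"
proof (induction k)
  case 0 then show ?case by auto
next
  case (Suc k)
  have "Pk k t \<le> (t + real (Suc k)) ^ Suc k"
    using Suc by (smt (verit) of_nat_Suc of_nat_0_le_iff power_mono zero_le_power)
  then have "Pk k t * (t + real k + 1) \<le> (t + real (Suc k)) ^ Suc k * (t + real (Suc k))"
    using Suc Pk_lower[of t k] by (intro mult_mono) (auto simp: zero_le_power)
  then show ?case by (simp add: algebra_simps)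
qed

lemma Pk_mono: "0 \<le> t \<Longrightarrow> t \<le> t' \<Longrightarrow> Pk k t \<le> Pk k t'"
proof (induction k)
  case 0 then show ?case by auto
next
  case (Suc k)
  have "0 \<le> Pk k t" using Pk_lower[of t k] Suc.prems by (smt (verit) zero_le_power)
  then show ?case using Suc by (auto intro!: mult_mono)
qed

lemma Pk_ratio: "0 < t \<Longrightarrow> t \<le> t' \<Longrightarrow> Pk k t' \<le> Pk k t * (t' / t) ^ (Suc k)"
proof (induction k)
  case 0 then show ?case by auto
next
  case (Suc k)
  have q: "0 \<le> Pk k t'" using Pk_lower[of t' k] Suc.prems by (smt (verit) zero_le_power)
  have r: "t' + real k + 1 \<le> (t + real k + 1) * (t' / t)"
  proof -
    have "t * (1 + real k) \<le> t' * (1 + real k)"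
      using Suc.prems by (intro mult_right_mono) auto
    then have "t * (t' + real k + 1) \<le> (t + real k + 1) * t'"
      by (simp add: algebra_simps)
    then show ?thesis using Suc.prems by (simp add: field_simps)
  qed
  have "Pk (Suc k) t' = Pk k t' * (t' + real k + 1)" by simp
  also have "\<dots> \<le> (Pk k t * (t' / t) ^ (Suc k)) * ((t + real k + 1) * (t' / t))"
    using Suc q r by (intro mult_mono) auto
  also have "\<dots> = Pk (Suc k) t * (t' / t) ^ Suc (Suc k)"
  proof -
    define r where "r = t' / t"
    show ?thesis unfolding r_def[symmetric] by (simp add: algebra_simps)
  qed
  finally show ?case .
qed

lemma window:
  fixes x :: real
  assumes n: "n \<ge> 1" and g1: "1/8 \<le> fact k * x / Pk k (real n)" and g2: "fact k * x / Pk k (real n) \<le> 1/2"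
  shows "\<exists>i\<le>k. \<forall>a::int. \<bar>x / real (n+i) - a\<bar> \<ge> 1 / (16 * 2^k)"
proof (rule ccontr)
  assume "\<not> ?thesis"
  then have "\<forall>i\<le>k. \<exists>a::int. \<bar>x / real (n+i) - a\<bar> < 1 / (16 * 2^k)"
    by (meson not_le)
  note H = this
  have ex: "\<exists>a::int. \<bar>x / real m - a\<bar> < 1 / (16 * 2^k)" if "n \<le> m" "m \<le> n + k" for m
  proof -
    have "m - n \<le> k" "n + (m - n) = m" using that by auto
    then show ?thesis using H by metis
  qed
  define a where "a m = (SOME a::int. \<bar>x / real m - a\<bar> < 1 / (16 * 2^k))" for m
  have a: "\<bar>x / real m - a m\<bar> < 1 / (16 * 2^k)" if "n \<le> m" "m \<le> n + k" for m
    unfolding a_def using someI_ex[OF ex[OF that]] .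
  have ha: "\<forall>i\<le>k. \<bar>x / real (n+i) - of_int (a (n+i))\<bar> < 1 / (16 * 2^k)"
    using a by (metis le_add1 add_le_cancel_left)
  have "\<bar>Dif k (\<lambda>m. x / real m - of_int (a m)) n\<bar> < 2^k * (1 / (16 * 2^k))"
    by (intro Dif_small) (use ha in auto)
  then have sm: "\<bar>Dif k (\<lambda>m. x / real m) n - Dif k (\<lambda>m. of_int (a m)) n\<bar> < 1/16"
    by (simp add: Dif_diff)
  obtain z where z: "Dif k (\<lambda>m. of_int (a m)) n = of_int z" using Dif_int by (metis Ints_cases)
  have "Dif k (\<lambda>m. x / real m) n = fact k * x / Pk k (real n)" using n by (rule Dif_recip)
  define G where "G = fact k * x / Pk k (real n)"
  have "\<bar>G - of_int z\<bar> < 1/16" "1/8 \<le> G" "G \<le> 1/2"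
    using sm z g1 g2 \<open>Dif k (\<lambda>m. x / real m) n = fact k * x / Pk k (real n)\<close>
    unfolding G_def by auto
  then have "0 < real_of_int z" "real_of_int z < 1" by linarith+
  then have "0 < z" "z < 1" by simp_all
  then show False by linarith
qed

lemma cos_bound:
  fixes y e :: real
  assumes e: "0 < e" "e \<le> 1/2" and d: "\<forall>a::int. \<bar>y - a\<bar> \<ge> e"
  shows "\<bar>cos (pi * y)\<bar> \<le> exp (- (e^2))"
proof -
  define a where "a = round y"
  define t where "t = y - of_int a"
  have t1: "\<bar>t\<bar> \<le> 1/2" unfolding t_def a_def using of_int_round_abs_le[of y] by linarith
  have t2: "\<bar>t\<bar> \<ge> e" unfolding t_def using d by auto
  have s0: "sin (of_int a * pi) = 0" by (simp add: sin_times_pi_eq_0)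
  have c1: "\<bar>cos (of_int a * pi)\<bar> = 1"
  proof -
    have "(sin (of_int a * pi))^2 + (cos (of_int a * pi))^2 = 1" by (rule sin_cos_squared_add)
    then have "(cos (of_int a * pi))^2 = 1" using s0 by simp
    then show ?thesis by (metis abs_power2 power2_eq_1_iff abs_1 abs_neg_one abs_abs) 
  qed
  have "cos (pi * y) = cos (pi * t + of_int a * pi)" unfolding t_def by (simp add: algebra_simps)
  also have "\<dots> = cos (pi * t) * cos (of_int a * pi)" by (simp add: cos_add s0)
  finally have "\<bar>cos (pi * y)\<bar> = \<bar>cos (pi * t)\<bar>" using c1 by (simp add: abs_mult)
  also have "\<bar>cos (pi * t)\<bar> = cos (pi * \<bar>t\<bar>)"
  proof -
    have "cos (pi * t) = cos \<bar>pi * t\<bar>" by simp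
    also have "\<bar>pi * t\<bar> = pi * \<bar>t\<bar>" by (simp add: abs_mult)
    finally have eq: "cos (pi * t) = cos (pi * \<bar>t\<bar>)" .
    have p1: "0 \<le> pi * \<bar>t\<bar>" by simp
    have p2: "pi * \<bar>t\<bar> \<le> pi * (1/2)" using t1 by (intro mult_left_mono) auto
    have "0 \<le> cos (pi * \<bar>t\<bar>)" by (intro cos_ge_zero) (use p1 p2 pi_gt_zero in linarith)+
    then show ?thesis using eq by simp
  qed
  also have "\<dots> \<le> cos (pi * e)"
    using t1 t2 e by (intro cos_monotone_0_pi_le) auto
  also have "cos (pi * e) = 1 - 2 * sin (pi * e / 2) ^ 2"
    using cos_double_sin[of "pi * e / 2"] by simp
  also have "\<dots> \<le> 1 - e^2"
  proof -
    define w where "w = pi * e / 2"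
    have hw: "pi * e \<le> pi * (1/2)" using e by (intro mult_left_mono) auto
    have w01: "0 \<le> w" unfolding w_def using e by simp
    have w02: "w \<le> 1" unfolding w_def using hw pi_less_4 by linarith
    note w0 = w01 w02
    have "\<bar>sin w - (\<Sum>m<3. sin_coeff m * w ^ m)\<bar> \<le> inverse (fact 3) * \<bar>w\<bar> ^ 3"
      by (rule Maclaurin_sin_bound)
    moreover have "(\<Sum>m<3. sin_coeff m * w ^ m) = w"
      by (simp add: numeral_3_eq_3 sin_coeff_def)
    ultimately have "\<bar>sin w - w\<bar> * 6 \<le> w ^ 3" using w0 by (simp add: fact_numeral)
    then have "sin w \<ge> w - w^3 / 6" by (auto simp: abs_if split: if_splits)
    moreover have "w^3 \<le> w" using power_decreasing[of 1 3 w] w0 by simp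
    ultimately have sw: "sin w \<ge> 5/6 * w" by linarith
    have "w \<ge> 3/2 * e" using e pi_gt3 unfolding w_def by auto
    then have "sin w \<ge> e" using sw e by linarith
    then have "sin w ^ 2 \<ge> e^2" using e by (intro power_mono) auto
    moreover have "0 \<le> e^2" by simp
    ultimately show ?thesis unfolding w_def by linarith
  qed
  also have "\<dots> \<le> exp (- (e^2))" using exp_ge_add_one_self[of "- (e^2)"] by linarith
  finally show ?thesis .
qed

lemma rho_prod_bound:
  fixes x e :: real and N J :: nat and M :: "nat \<Rightarrow> nat"
  assumes mono: "strict_mono_on {..<J} M" and rng: "\<And>j. j < J \<Longrightarrow> 1 \<le> M j \<and> M j \<le> N"
    and bnd: "\<And>j. j < J \<Longrightarrow> \<bar>cos (pi * (x / real (M j)))\<bar> \<le> exp (- e)"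
  shows "\<bar>rho N x\<bar> \<le> exp (- (e * real J))"
proof -
  define f where "f n = \<bar>cos (pi * x / real n)\<bar>" for n
  define S where "S = M ` {..<J}"
  have SA: "S \<subseteq> {1..N}" using rng unfolding S_def by auto
  have inj: "inj_on M {..<J}" using mono by (rule strict_mono_on_imp_inj_on)
  have "\<bar>rho N x\<bar> = (\<Prod>n=1..N. f n)" unfolding rho_def f_def by (simp add: abs_prod)
  also have "\<dots> = (\<Prod>n\<in>{1..N} - S. f n) * (\<Prod>n\<in>S. f n)"
    using SA by (intro prod.subset_diff) auto
  also have "\<dots> \<le> 1 * (\<Prod>n\<in>S. f n)"
    by (intro mult_right_mono prod_le_1 prod_nonneg) (auto simp: f_def)
  also have "(\<Prod>n\<in>S. f n) = (\<Prod>j<J. f (M j))"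
    unfolding S_def using inj by (simp add: prod.reindex)
  also have "\<dots> \<le> (\<Prod>j<J. exp (- e))"
    using bnd by (intro prod_mono) (auto simp: f_def)
  also have "\<dots> = exp (- e) ^ J" by simp
  also have "\<dots> = exp (- (e * real J))" by (metis exp_of_nat_mult mult.commute mult_minus_left)
  finally show ?thesis by simp
qed

lemma core:
  fixes C lam C' del S0 E l x :: real and N :: nat
  assumes C: "C > 0" and lam: "0 < lam" "lam \<le> 1" and C'def: "C' = C / lam^2"
    and del: "0 < del" "del \<le> 1" "C' * ln 4 = 1 - del" and S0def: "S0 = 2 / del"
    and Edef: "E = del / (4 * sqrt C')"
    and N: "N \<ge> 1" and ldef: "l = ln (real N)" and lpos: "l > 0"
    and A1: "(ln 512 + S0 * ln 4) + 2 * ln ((C' * lam) * l + 1) \<le> (del * lam / 4) * l"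
    and A2: "2 * (((C' * lam) * l + 1) + ((C' * lam) * l + 1)^2) \<le> exp ((lam / 2) * l)"
    and A4: "2 + 4 * ((C' * lam) * l + 1) * exp (lam * l) \<le> exp l"
    and x1: "real N \<le> x" and x2: "x \<le> exp (C * l^2)"
  shows "\<bar>rho N x\<bar> \<le> exp (- (pi^2 / 400^2) * exp (E * sqrt (ln x)))"
proof -
  have Npos: "real N > 0" using N by simp
  have expl: "exp l = real N" using Npos ldef by simp
  have xpos: "x > 0" using x1 Npos by linarith
  define u where "u = ln x"
  have xu: "x = exp u" using xpos u_def by simp
  have u1: "l \<le> u" unfolding u_def ldef using x1 Npos by simp
  have u2: "u \<le> C * l^2" unfolding u_def using x2 xpos by (metis ln_exp ln_le_cancel_iff exp_gt_zero)
  define L where "L = lam * l"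
  have Lpos: "L > 0" using lam lpos unfolding L_def by simp
  have Ll: "L \<le> l" using lam lpos unfolding L_def by (simp add: mult_le_cancel_right1)
  have Cp: "C' > 0" using C lam C'def by simp
  have CL: "C * l^2 = C' * L^2" unfolding C'def L_def using lam by (simp add: field_simps power2_eq_square)
  define s where "s = u / L"
  have sL: "s * L = u" unfolding s_def using Lpos by simp
  have s1: "s \<ge> 1" unfolding s_def using u1 Ll Lpos by simp
  have s2: "s \<le> C' * L"
  proof -
    have "s * L \<le> (C' * L) * L" using sL u2 CL by (simp add: power2_eq_square mult.assoc)
    then show ?thesis using Lpos by simp
  qed
  have upos: "u > 0" using sL s1 Lpos by (metis mult_pos_pos zero_less_one less_le_trans)
  define k where "k = nat \<lceil>s\<rceil> - 1"
  define K1 where "K1 = real (k + 1)"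
  have K1eq: "K1 = of_int \<lceil>s\<rceil>" unfolding K1_def k_def using s1 by (simp add: of_nat_diff)
  have K1s: "s \<le> K1" "K1 < s + 1" unfolding K1eq by linarith+
  have K1ge: "K1 \<ge> 1" unfolding K1_def by simp
  define Kb where "Kb = (C' * lam) * l + 1"
  have KbL: "Kb = C' * L + 1" unfolding Kb_def L_def by simp
  have K1Kb: "K1 \<le> Kb" using K1s s2 KbL by linarith
  have ks: "real k \<le> s" using K1s unfolding K1_def by simp
  define X where "X = exp (u / K1)"
  have Xpow: "X ^ (k+1) = x"
  proof -
    have "X ^ (k+1) = exp (real (k+1) * (u / K1))" unfolding X_def by (simp only: exp_of_nat_mult)
    also have "real (k+1) * (u / K1) = u" unfolding K1_def by simp
    finally show ?thesis using xu by simp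
  qed
  have Xpos: "X > 0" unfolding X_def by simp
  have uK1: "u / K1 \<le> L"
  proof -
    have "u / K1 \<le> u / s" using K1s s1 upos by (intro divide_left_mono) auto
    moreover have "u / s = L" using upos Lpos by (simp add: s_def)
    ultimately show ?thesis by simp
  qed
  have XL: "X \<le> exp L" unfolding X_def using uK1 by simp
  have uK2: "u / K1 \<ge> L * s / (s + 1)"
  proof -
    have "u / (s + 1) \<le> u / K1" using K1s K1ge upos by (intro divide_left_mono) auto
    then show ?thesis using sL by (simp add: mult.commute)
  qed
  have half: "L * s / (s + 1) \<ge> L / 2"
  proof -
    have "L * (s+1) \<le> 2 * (L * s)" using s1 Lpos by (simp add: algebra_simps)
    then show ?thesis using s1 by (simp add: field_simps)
  qed
  have "L / 2 \<le> u / K1" using uK2 half by linarith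
  then have XL2: "X \<ge> exp (L / 2)" unfolding X_def by simp
  have XK: "X \<ge> 2 * (K1 + K1^2)"
  proof -
    have "2 * (K1 + K1^2) \<le> 2 * (Kb + Kb^2)" using K1Kb K1ge by (intro mult_left_mono add_mono power_mono) auto
    also have "\<dots> \<le> exp ((lam / 2) * l)" using A2 unfolding Kb_def .
    also have "(lam / 2) * l = L / 2" unfolding L_def by simp
    finally show ?thesis using XL2 by linarith
  qed
  define fk where "fk = (fact k :: real)"
  have fk1: "fk \<ge> 1" unfolding fk_def by simp
  define T where "T = 2 * fk * x"
  have Tx: "x \<le> T" unfolding T_def using fk1 xpos by simp
  have Tpos: "T > 0" unfolding T_def using fk1 xpos by simp
  define B where "B = nat \<lceil>2 * K1 * X\<rceil>"
  have B1: "real B \<ge> 2 * K1 * X" unfolding B_def by linarith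
  have B2: "real B \<le> 2 * K1 * X + 1" unfolding B_def using K1ge Xpos by (simp add: of_nat_nat)
  have PB: "T \<le> Pk k (real B)"
  proof -
    have fkK: "fk \<le> K1 ^ (k+1)"
    proof -
      have "fk \<le> fact (k+1)" unfolding fk_def by (intro fact_mono) auto
      also have "(fact (k+1) :: real) \<le> of_nat ((k+1)^(k+1))" by (rule fact_le_power)
      finally show ?thesis unfolding K1_def by (metis of_nat_power)
    qed
    have "T = 2 * fk * X^(k+1)" unfolding T_def Xpow ..
    also have "\<dots> \<le> 2^(k+1) * K1^(k+1) * X^(k+1)"
    proof -
      have "(2::real) \<le> 2^(k+1)" using one_le_power[of "2::real" k] by simp
      then have "2 * fk \<le> 2^(k+1) * K1^(k+1)" using fkK fk1 by (intro mult_mono) auto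
      then show ?thesis using Xpos by (intro mult_right_mono) auto
    qed
    also have "\<dots> = (2 * K1 * X)^(k+1)" by (simp add: power_mult_distrib)
    also have "\<dots> \<le> real B ^ (k+1)" using B1 K1ge Xpos by (intro power_mono) auto
    also have "\<dots> \<le> Pk k (real B)" using Pk_lower[of "real B" k] by simp
    finally show ?thesis .
  qed
  define n0 where "n0 = (LEAST n. T \<le> Pk k (real n))"
  have n0P: "T \<le> Pk k (real n0)" unfolding n0_def using PB by (rule LeastI)
  have n0B: "n0 \<le> B" unfolding n0_def using PB by (rule Least_le)
  have n0X: "X \<le> real n0 + real k"
  proof -
    have "X ^ Suc k \<le> (real n0 + real k) ^ Suc k"
      using Xpow Tx n0P Pk_upper[of "real n0" k] by simp
    then show ?thesis by (rule power_le_imp_le_base) simp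
  qed
  have n02: "n0 \<ge> 2"
  proof -
    have "0 \<le> K1^2" by simp
    then have "K1 + 1 \<le> 2 * (K1 + K1^2)" using K1ge by (smt (verit))
    moreover have "real k = K1 - 1" unfolding K1_def by simp
    ultimately have "real n0 \<ge> 2" using n0X XK by linarith
    then show ?thesis by simp
  qed
  define m0 where "m0 = n0 - 1"
  have m0n0: "real m0 = real n0 - 1" "m0 < n0" "m0 \<ge> 1" unfolding m0_def using n02 by auto
  have Pm0: "Pk k (real m0) < T"
    using not_less_Least[of m0 "\<lambda>n. T \<le> Pk k (real n)"] m0n0 unfolding n0_def by auto
  have m0X: "real m0 \<ge> X - K1" using m0n0 n0X unfolding K1_def by simp
  define q where "q = (k+1)^2"
  define J where "J = m0 div q"
  have qpos: "q > 0" unfolding q_def by simp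
  have dm: "J * q + m0 mod q = m0" unfolding J_def by (rule div_mult_mod_eq)
  have mlt: "m0 mod q < q" using qpos by simp
  have Jq: "J * q \<le> m0" using dm by linarith
  have "m0 < J * q + q" using dm mlt by linarith
  then have Jq2: "m0 < (J + 1) * q" by (simp add: algebra_simps)
  have Jreal: "real J \<ge> X / (2 * K1^2)"
  proof -
    have q2: "real q = K1^2" unfolding q_def K1_def by simp
    have "real m0 < real ((J + 1) * q)" using Jq2 by (simp only: of_nat_less_iff)
    then have "real m0 < (real J + 1) * K1^2" using q2 by (simp add: algebra_simps)
    then have "real J > real m0 / K1^2 - 1" using K1ge by (simp add: field_simps)
    moreover have "real m0 / K1^2 - 1 \<ge> X / (2 * K1^2)"
    proof -
      have "X / 2 \<le> X - K1 - K1^2" using XK by simp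
      also have "\<dots> \<le> real m0 - K1^2" using m0X by simp
      finally have "X / 2 \<le> real m0 - K1^2" .
      then show ?thesis using K1ge by (simp add: field_simps)
    qed
    ultimately show ?thesis by linarith
  qed
  define ee where "ee = 1 / (16 * 2^k :: real)"
  define st where "st j = n0 + j * (k+1)" for j
  have win: "\<exists>i\<le>k. \<forall>a::int. \<bar>x / real (st j + i) - a\<bar> \<ge> ee" if j: "j < J" for j
  proof -
    have st1: "st j \<ge> 1" unfolding st_def using n02 by simp
    have up: "fk * x / Pk k (real (st j)) \<le> 1/2"
    proof -
      have "T \<le> Pk k (real (st j))"
        using n0P Pk_mono[of "real n0" "real (st j)" k] unfolding st_def by simp
      then have "fk * x / Pk k (real (st j)) \<le> fk * x / T"
        using Tpos fk1 xpos by (intro divide_left_mono) auto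
      also have "fk * x / T = 1/2" unfolding T_def using fk1 xpos by simp
      finally show ?thesis .
    qed
    have lo: "1/8 \<le> fk * x / Pk k (real (st j))"
    proof -
      have d1: "(1 + j*(k+1)) * (k+1) \<le> m0"
      proof -
        have "(1 + j*(k+1)) * (k+1) \<le> (j+1) * q" unfolding q_def by (simp add: power2_eq_square algebra_simps)
        also have "\<dots> \<le> J * q" using j by (intro mult_right_mono) auto
        finally show ?thesis using Jq by linarith
      qed
      have stm: "real (st j) = real m0 + real (1 + j*(k+1))" unfolding st_def m0_def using n02 by simp
      have ratio: "real (st j) / real m0 \<le> 1 + 1 / K1"
      proof -
        have "real ((1 + j*(k+1)) * (k+1)) \<le> real m0" using d1 by (simp only: of_nat_le_iff)
        then have "real (1 + j*(k+1)) * K1 \<le> real m0" unfolding K1_def by (simp only: of_nat_mult)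
        then have "real (1 + j*(k+1)) \<le> real m0 / K1" using K1ge by (simp add: field_simps)
        then have "real (st j) \<le> real m0 * (1 + 1/K1)" using stm by (simp add: algebra_simps)
        moreover have "real m0 > 0" using m0n0 by simp
        ultimately show ?thesis by (simp add: divide_le_eq mult.commute)
      qed
      have r4: "(real (st j) / real m0) ^ (k+1) \<le> 4"
      proof -
        have "(real (st j) / real m0) ^ (k+1) \<le> (1 + 1/K1) ^ (k+1)"
          using ratio m0n0 by (intro power_mono) auto
        also have "\<dots> \<le> exp (1 / K1) ^ (k+1)"
          using K1ge exp_ge_add_one_self[of "1/K1"] by (intro power_mono) (auto simp: add.commute)
        also have "\<dots> = exp (real (k+1) * (1/K1))" by (simp only: exp_of_nat_mult)
        also have "real (k+1) * (1/K1) = 1" unfolding K1_def by simp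
        finally show ?thesis using exp_le by simp
      qed
      have "Pk k (real (st j)) \<le> Pk k (real m0) * (real (st j) / real m0) ^ (k+1)"
      proof -
        have "m0 \<le> st j" unfolding st_def m0_def by simp
        then have aux: "0 < real m0" "real m0 \<le> real (st j)" using m0n0 by simp_all
        show ?thesis using Pk_ratio[OF aux, of k] by simp
      qed
      also have "\<dots> \<le> T * 4"
        using Pm0 r4 Pk_pos[of "real m0" k] m0n0 by (intro mult_mono) auto
      finally have "Pk k (real (st j)) \<le> 8 * (fk * x)" unfolding T_def by simp
      moreover have "Pk k (real (st j)) > 0" using st1 by (intro Pk_pos) simp
      ultimately show ?thesis by (simp add: field_simps)
    qed
    have "\<exists>i\<le>k. \<forall>a::int. \<bar>x / real (st j + i) - a\<bar> \<ge> 1 / (16 * 2^k)"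
      using window[OF st1, of k x] up lo unfolding fk_def by simp
    then show ?thesis unfolding ee_def .
  qed
  have "\<forall>j. \<exists>i. j < J \<longrightarrow> i \<le> k \<and> (\<forall>a::int. \<bar>x / real (st j + i) - a\<bar> \<ge> ee)" using win by blast
  from choice[OF this] obtain I where I0: "\<forall>j. j < J \<longrightarrow> I j \<le> k \<and> (\<forall>a::int. \<bar>x / real (st j + I j) - a\<bar> \<ge> ee)"
    by blast
  have I: "I j \<le> k \<and> (\<forall>a::int. \<bar>x / real (st j + I j) - a\<bar> \<ge> ee)" if "j < J" for j
    using I0 that by blast
  define M where "M j = st j + I j" for j
  have smono: "strict_mono_on {..<J} M"
  proof (rule strict_mono_onI)
    fix j1 j2 assume h: "j1 \<in> {..<J}" "j2 \<in> {..<J}" "j1 < j2"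
    have "M j1 \<le> n0 + j1 * (k+1) + k" unfolding M_def st_def using I h by auto
    also have "\<dots> < n0 + (j1 + 1) * (k+1)" by simp
    also have "\<dots> \<le> n0 + j2 * (k+1)" using h by (intro add_left_mono mult_right_mono) auto
    also have "\<dots> \<le> M j2" unfolding M_def st_def by simp
    finally show "M j1 < M j2" .
  qed
  have rng: "1 \<le> M j \<and> M j \<le> N" if j: "j < J" for j
  proof -
    have "M j \<le> n0 + j * (k+1) + k" unfolding M_def st_def using I j by auto
    also have "\<dots> \<le> n0 + (J - 1) * (k+1) + k" using j by (intro add_right_mono add_left_mono mult_right_mono) auto
    also have "\<dots> = m0 + J * (k+1)" using j n02 unfolding m0_def by (cases J) (auto simp: algebra_simps)
    also have "\<dots> \<le> m0 + J * q" unfolding q_def by (intro add_left_mono mult_left_mono) (auto simp: power2_eq_square)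
    also have "\<dots> \<le> 2 * m0" using Jq by simp
    finally have "real (M j) \<le> real (2 * m0)" by (simp only: of_nat_le_iff)
    then have Mm: "real (M j) \<le> 2 * real m0" by simp
    have "real n0 \<le> real B" using n0B by simp
    then have "real m0 \<le> 2 * K1 * X" using m0n0(1) B2 by linarith
    then have "real (M j) \<le> 4 * K1 * X" using Mm by linarith
    also have "\<dots> \<le> 4 * Kb * exp L" using K1Kb XL K1ge Xpos by (intro mult_mono) auto
    also have "\<dots> \<le> exp l" using A4 unfolding Kb_def L_def by simp
    finally have "real (M j) \<le> real N" using expl by simp
    moreover have "M j \<ge> 1" unfolding M_def st_def using n02 by simp
    ultimately show ?thesis by simp
  qed
  have p2k: "(1::real) \<le> 2^k" by simp
  have ee01: "0 < ee" unfolding ee_def by simp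
  have "1 / (16 * 2^k) \<le> (1::real) / 16" using p2k by (intro divide_left_mono) auto
  then have ee02: "ee \<le> 1/2" unfolding ee_def by linarith
  note ee0 = ee01 ee02
  have cosb: "\<bar>cos (pi * (x / real (M j)))\<bar> \<le> exp (- (ee^2))" if "j < J" for j
    using cos_bound[OF ee0] I[OF that] unfolding M_def by blast
  have main: "\<bar>rho N x\<bar> \<le> exp (- (ee^2 * real J))"
    by (rule rho_prod_bound[OF smono]) (use rng cosb in auto)
  have sqC: "sqrt C' > 0" using Cp by simp
  have Eu: "E * sqrt u \<le> del * L / 4"
  proof -
    have "u \<le> C' * L^2" using sL s2 Lpos by (simp add: power2_eq_square mult_right_mono mult.assoc[symmetric] flip: sL)
    then have "sqrt u \<le> sqrt (C' * L^2)" by (rule real_sqrt_le_mono)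
    also have "\<dots> = sqrt C' * L" using Lpos by (simp add: real_sqrt_mult)
    finally have "sqrt u \<le> sqrt C' * L" .
    then have "E * sqrt u \<le> E * (sqrt C' * L)" using Edef del sqC by (intro mult_left_mono) auto
    also have "E * (sqrt C' * L) = del * L / 4" using Edef sqC by (simp add: field_simps)
    finally show ?thesis .
  qed
  have lnK: "ln K1 \<le> ln Kb" using K1Kb K1ge by simp
  have A1': "ln 512 + S0 * ln 4 + 2 * ln Kb \<le> del * L / 4"
    using A1 unfolding Kb_def L_def by (simp add: algebra_simps)
  have S0pos: "S0 * ln 4 \<ge> 0" using S0def del by simp
  have ln4: "ln (4::real) > 0" by simp
  have kl: "real k * ln 4 \<le> s * ln 4" using ks ln4 by (intro mult_right_mono) auto
  have key: "E * sqrt u + ln 512 + 2 * ln K1 + real k * ln 4 \<le> u / K1"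
  proof (cases "s \<ge> S0")
    case True
    have "1 / (s + 1) \<le> del / 2"
    proof -
      have "2 / del \<le> s + 1" using True S0def by simp
      then have "2 \<le> del * (s + 1)" using del by (simp add: field_simps)
      then show ?thesis using s1 del by (simp add: field_simps)
    qed
    then have "L * (1 / (s + 1)) \<le> L * (del / 2)" using Lpos by (intro mult_left_mono) auto
    moreover have "L * s / (s + 1) = L - L * (1 / (s + 1))" using s1 by (simp add: field_simps)
    ultimately have h1: "u / K1 \<ge> L - L * (del / 2)" using uK2 by linarith
    have "s * ln 4 \<le> (C' * L) * ln 4" using s2 ln4 by (intro mult_right_mono) auto
    also have "(C' * L) * ln 4 = L * (C' * ln 4)" by (simp add: ac_simps)
    also have "\<dots> = (1 - del) * L" using del(3) by simp
    finally have h2: "real k * ln 4 \<le> (1 - del) * L" using kl by linarith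
    show ?thesis using h1 h2 Eu lnK A1' S0pos by (simp add: algebra_simps)
  next
    case False
    have "s * ln 4 \<le> S0 * ln 4" using False ln4 by (intro mult_right_mono) auto
    then have h2: "real k * ln 4 \<le> S0 * ln 4" using kl by linarith
    have h1: "u / K1 \<ge> L / 2" using uK2 half by linarith
    have "del * L \<le> 1 * L" using del Lpos by (intro mult_right_mono) auto
    then show ?thesis using h1 h2 Eu lnK A1' by linarith
  qed
  have four: "((2::real)^k)^2 = 4^k"
  proof -
    have "((2::real)^k)^2 = 2^k * 2^k" by (simp add: power2_eq_square)
    also have "\<dots> = (2*2)^k" by (simp only: power_mult_distrib)
    finally show ?thesis by simp
  qed
  have prodX: "512 * K1^2 * 4^k * exp (E * sqrt u) \<le> X"
  proof -
    have e1: "exp (real k * ln 4) = 4^k" using exp_of_nat_mult[of k "ln (4::real)"] by simp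
    have e2: "exp (2 * ln K1) = K1^2" using exp_of_nat_mult[of 2 "ln (K1::real)"] K1ge by simp
    have e3: "exp (ln 512) = (512::real)" by simp
    have "512 * K1^2 * 4^k * exp (E * sqrt u) = exp (ln 512 + 2 * ln K1 + real k * ln 4 + E * sqrt u)"
      by (simp only: exp_add e1 e2 e3)
    also have "\<dots> \<le> X" unfolding X_def using key by (simp add: algebra_simps)
    finally show ?thesis .
  qed
  have ee2: "ee^2 = 1 / (256 * 4^k)" unfolding ee_def using four by (simp add: power_mult_distrib power_divide)
  have bound: "exp (E * sqrt u) \<le> ee^2 * real J"
  proof -
    have K1p: "K1^2 > 0" using K1ge by simp
    have "exp (E * sqrt u) \<le> X / (512 * K1^2 * 4^k)"
      using prodX K1p by (simp add: field_simps)
    also have "\<dots> = ee^2 * (X / (2 * K1^2))" unfolding ee2 by (simp add: field_simps)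
    also have "\<dots> \<le> ee^2 * real J" using Jreal by (intro mult_left_mono) auto
    finally show ?thesis .
  qed
  have pi16: "pi^2 / 400^2 \<le> (1::real)"
  proof -
    have "pi^2 \<le> (4::real)^2" using pi_less_4 pi_gt_zero by (intro power_mono) auto
    then show ?thesis by simp
  qed
  have "(pi^2 / 400^2) * exp (E * sqrt u) \<le> 1 * exp (E * sqrt u)"
    using pi16 by (intro mult_right_mono) auto
  then have "(pi^2 / 400^2) * exp (E * sqrt u) \<le> ee^2 * real J" using bound by linarith
  then have "exp (- (ee^2 * real J)) \<le> exp (- (pi^2 / 400^2) * exp (E * sqrt u))" by simp
  then show ?thesis using main unfolding u_def by linarith
qed

lemma asym1: fixes a b c :: real assumes "a > 0" "b > 0"
  shows "eventually (\<lambda>l::real. c + 2 * ln (b * l + 1) \<le> a * l) at_top"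
  using assms by real_asymp

lemma asym2: fixes a b :: real assumes "a > 0" "b > 0"
  shows "eventually (\<lambda>l::real. 2 * ((b * l + 1) + (b * l + 1)^2) \<le> exp (a * l)) at_top"
  using assms by real_asymp

lemma asym4: fixes a b :: real assumes "a > 0" "a < 1" "b > 0"
  shows "eventually (\<lambda>l::real. 2 + 4 * (b * l + 1) * exp (a * l) \<le> exp l) at_top"
  using assms by real_asymp

theorem proposition3p5:
  fixes C :: real
  assumes "0 < C" and "C < 1 / ln 4"
  shows "\<exists>E>0. \<forall>\<^sub>F N in sequentially.
           \<forall>x::real. real N \<le> x \<and> x \<le> exp (C * (ln (real N))^2) \<longrightarrow>
             \<bar>rho N x\<bar> \<le> exp (- (pi^2 / 400^2) * exp (E * sqrt (ln x)))"
proof -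
  have ln4: "ln (4::real) > 0" by simp
  define th where "th = C * ln 4"
  have th0: "0 < th" unfolding th_def using assms ln4 by simp
  have th1: "th < 1" unfolding th_def using assms ln4 by (simp add: field_simps)
  define lam where "lam = sqrt ((1 + th) / 2)"
  have lam2: "lam^2 = (1 + th) / 2" unfolding lam_def using th0 by simp
  have lam0: "0 < lam" unfolding lam_def using th0 by simp
  have lam1: "lam < 1" unfolding lam_def using th1 by simp
  define C' where "C' = C / lam^2"
  have Cp: "C' > 0" unfolding C'_def using assms lam0 by simp
  have C'ln: "C' * ln 4 = 2 * th / (1 + th)" unfolding C'_def lam2 th_def using th0 th_def
    by (simp add: field_simps)
  define del where "del = 1 - C' * ln 4"
  have del0: "del > 0" unfolding del_def C'ln using th0 th1 by (simp add: field_simps)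
  have del1: "del \<le> 1" unfolding del_def using Cp ln4 by simp
  have del3: "C' * ln 4 = 1 - del" unfolding del_def by simp
  define S0 where "S0 = 2 / del"
  define E where "E = del / (4 * sqrt C')"
  have E0: "E > 0" unfolding E_def using del0 Cp by simp
  define P where "P l = ((ln 512 + S0 * ln 4) + 2 * ln ((C' * lam) * l + 1) \<le> (del * lam / 4) * l
      \<and> 2 * (((C' * lam) * l + 1) + ((C' * lam) * l + 1)^2) \<le> exp ((lam / 2) * l)
      \<and> 2 + 4 * ((C' * lam) * l + 1) * exp (lam * l) \<le> exp l \<and> l > 0)" for l :: real
  have e1: "eventually (\<lambda>l::real. (ln 512 + S0 * ln 4) + 2 * ln ((C' * lam) * l + 1) \<le> (del * lam / 4) * l) at_top"
    using del0 lam0 Cp by (intro asym1) auto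
  have e2: "eventually (\<lambda>l::real. 2 * (((C' * lam) * l + 1) + ((C' * lam) * l + 1)^2) \<le> exp ((lam / 2) * l)) at_top"
    using lam0 Cp by (intro asym2) auto
  have e3: "eventually (\<lambda>l::real. 2 + 4 * ((C' * lam) * l + 1) * exp (lam * l) \<le> exp l) at_top"
    using lam0 lam1 Cp by (intro asym4) auto
  have e4: "eventually (\<lambda>l::real. l > 0) at_top" by (rule eventually_gt_at_top)
  have evP: "eventually P at_top"
    using e1 e2 e3 e4 unfolding P_def by eventually_elim blast
  have lim: "filterlim (\<lambda>N. ln (real N)) at_top sequentially"
    by (rule filterlim_compose[OF ln_at_top filterlim_real_sequentially])
  have evN: "eventually (\<lambda>N. P (ln (real N))) sequentially"
    using lim evP unfolding filterlim_iff by blast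
  have "\<forall>\<^sub>F N in sequentially.
           \<forall>x::real. real N \<le> x \<and> x \<le> exp (C * (ln (real N))^2) \<longrightarrow>
             \<bar>rho N x\<bar> \<le> exp (- (pi^2 / 400^2) * exp (E * sqrt (ln x)))"
    using evN eventually_ge_at_top[of "1::nat"]
  proof (eventually_elim)
    case (elim N)
    show ?case
    proof (intro allI impI)
      fix x :: real assume hx: "real N \<le> x \<and> x \<le> exp (C * (ln (real N))^2)"
      show "\<bar>rho N x\<bar> \<le> exp (- (pi^2 / 400^2) * exp (E * sqrt (ln x)))"
        using elim hx unfolding P_def
        by (intro core[of C lam C' del S0 E N "ln (real N)" x])
          (use assms lam0 lam1 C'_def del0 del1 del3 S0_def E_def in auto)
    qed
  qed
  then show ?thesis using E0 by blast
qed

end
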